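(* Let $\mathbf{f}$ be the Fibonacci word, $\phi=\frac{1+\sqrt5}{2}$, and fix a positive integer $n$. Let $\ell$ be a positive integer such that $$\phi^{-n+1}\le \min\big(\{2\ell F_n\phi\},\,1-\{2\ell F_n\phi\}\big).$$ Then for every index $x\ge 0$, $$\mathbf{f}_{[x,\,x+2F_n]}\neq \mathbf{f}_{[x+2\ell F_n,\,x+2\ell F_n+2F_n]}.$$
   Context: The Fibonacci word is $\mathbf{f}=\sigma^{\omega}(0)=0100101001001\cdots$, the fixed point of the morphism $\sigma(0)=01$, $\sigma(1)=0$. Words are $0$-indexed and $v_{[i,j]}$ denotes the substring of $v$ with letters at indices $i,\dots,j-1$. $F_1=F_2=1$, $F_n=F_{n-1}+F_{n-2}$. $\{y\}$ denotes the fractional part of a real number $y$. *)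

theory Defs
  imports Complex_Main "HOL-Number_Theory.Fib"
begin

fun sigma_letter :: "nat \<Rightarrow> nat list" where
  "sigma_letter a = (if a = 0 then [0, 1] else [0])"

definition sigma :: "nat list \<Rightarrow> nat list" where
  "sigma w = concat (map sigma_letter w)"

text \<open>sigma^k(0); each is a prefix of the next, and its length is F(k+2) > k.\<close>
definition fib_prefix :: "nat \<Rightarrow> nat list" where
  "fib_prefix k = (sigma ^^ k) [0]"

text \<open>The infinite Fibonacci word f = sigma^omega(0), 0-indexed.\<close>
definition fib_word :: "nat \<Rightarrow> nat" where
  "fib_word i = fib_prefix (Suc i) ! i"

text \<open>Factor f_[i,j]: letters at indices i..j-1.\<close>
definition fib_factor :: "nat \<Rightarrow> nat \<Rightarrow> nat list" where
  "fib_factor i j = map fib_word [i..<j]"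

definition phi :: real where
  "phi = (1 + sqrt 5) / 2"

end

theory Submission
  imports Defs "HOL-Computational_Algebra.Primes"
begin

lemma sqrt5_irr: "sqrt 5 \<notin> \<rat>"
proof
  assume "sqrt 5 \<in> \<rat>"
  then obtain m n :: nat where n: "n \<noteq> 0" and sr: "\<bar>sqrt 5\<bar> = m / n" and cop: "coprime m n"
    by (rule Rats_abs_nat_div_natE)
  have "real m = sqrt 5 * n" using n sr by (simp add: field_simps)
  then have "real (m^2) = 5 * real (n^2)" by (simp add: power_mult_distrib)
  then have eq: "m^2 = 5 * n^2" by linarith
  have p5: "prime (5::nat)" by simp
  have "5 dvd m" using eq p5 prime_dvd_power by (metis dvd_triv_left)
  then obtain k where k: "m = 5 * k" ..
  with eq have "n^2 = 5 * k^2" by simp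
  then have "5 dvd n" using p5 prime_dvd_power by (metis dvd_triv_left)
  with \<open>5 dvd m\<close> cop show False
    by (metis coprime_common_divisor_nat numeral_eq_one_iff semiring_norm(86))
qed

lemma phi_sq: "phi^2 = phi + 1"
  unfolding phi_def by (simp add: power2_eq_square field_simps)

lemma sqrt5_bounds: "2.2 < sqrt 5" "sqrt 5 < 2.3"
proof -
  show "2.2 < sqrt 5" by (rule real_less_rsqrt) (simp add: power2_eq_square)
  have "sqrt 5 < sqrt (2.3^2)" by (subst real_sqrt_less_iff) (simp add: power2_eq_square)
  then show "sqrt 5 < 2.3" by simp
qed

lemma phi_bounds: "8/5 < phi" "phi < 33/20"
  using sqrt5_bounds unfolding phi_def by auto

lemma phi_int: assumes "t > 0" shows "real t * phi \<noteq> of_int k"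
proof
  assume h: "real t * phi = of_int k"
  have "sqrt 5 = (2 * of_int k - real t) / real t"
    using h assms unfolding phi_def by (simp add: field_simps)
  also have "\<dots> \<in> \<rat>" by simp
  finally show False using sqrt5_irr by simp
qed

definition g :: "nat \<Rightarrow> int" where "g t = \<lfloor>real t * phi\<rfloor>"

definition cw :: "nat \<Rightarrow> nat" where "cw i = (if g (i+2) - g (i+1) = 2 then 0 else 1)"

lemma floor_add_phi: "\<lfloor>x + phi\<rfloor> = \<lfloor>x\<rfloor> + 1 \<or> \<lfloor>x + phi\<rfloor> = \<lfloor>x\<rfloor> + 2"
proof -
  have a: "\<lfloor>x\<rfloor> + 1 \<le> \<lfloor>x + phi\<rfloor>" using phi_bounds by (subst le_floor_iff) linarith
  have c: "x < of_int \<lfloor>x\<rfloor> + 1" by linarith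
  have b: "\<lfloor>x + phi\<rfloor> < \<lfloor>x\<rfloor> + 3" proof -
    have b0: "x + phi < of_int \<lfloor>x\<rfloor> + 3" using phi_bounds c by linarith
    then show ?thesis by (simp add: floor_less_iff)
  qed
  from a b show ?thesis by linarith
qed

lemma g_step: "g (i+1) - g i = 1 \<or> g (i+1) - g i = 2"
proof -
  have "real (i+1) * phi = real i * phi + phi" by (simp add: algebra_simps)
  then show ?thesis unfolding g_def using floor_add_phi[of "real i * phi"] by auto
qed

lemma g_nonneg: "g t \<ge> 0"
  unfolding g_def using phi_bounds by simp

lemma key_floor:
  fixes s :: nat
  assumes s: "s > 0"
  defines "q \<equiv> \<lfloor>real s * phi\<rfloor>"
  shows "\<lfloor>(of_int q + 1) * phi\<rfloor> - \<lfloor>of_int q * phi\<rfloor> = 2"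
    and "\<lfloor>real (s+1) * phi\<rfloor> - q = 2 \<Longrightarrow> \<lfloor>(of_int q + 2) * phi\<rfloor> - \<lfloor>(of_int q + 1) * phi\<rfloor> = 1"
proof -
  define r where "r = real s * phi - of_int q"
  have r0: "0 \<le> r" "r < 1" unfolding r_def q_def by linarith+
  have "r \<noteq> 0" using phi_int[OF s, of q] unfolding r_def by simp
  with r0 have r1: "0 < r" by simp
  define w where "w = r * (phi - 1)"
  have w0: "0 < w" unfolding w_def using r1 phi_bounds by simp
  have w1: "w < phi - 1" unfolding w_def using r0 phi_bounds
    by (simp add: mult_less_cancel_right1)
  have id: "of_int q * phi = of_int q + real s - w"
  proof -
    have "of_int q * phi = (real s * phi - r) * phi" unfolding r_def by simp
    also have "\<dots> = real s * phi^2 - r * phi" by (simp add: power2_eq_square algebra_simps)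
    also have "\<dots> = of_int q + real s - w" unfolding phi_sq w_def r_def by (simp add: algebra_simps)
    finally show ?thesis .
  qed
  have f0: "\<lfloor>of_int q * phi\<rfloor> = q + int s - 1"
    unfolding id using w0 w1 phi_bounds by (subst floor_eq_iff) simp
  have f1: "\<lfloor>(of_int q + 1) * phi\<rfloor> = q + int s + 1"
  proof -
    have "(of_int q + 1) * phi = of_int q + real s - w + phi" using id by (simp add: algebra_simps)
    then show ?thesis using w0 w1 phi_bounds by (subst floor_eq_iff) simp
  qed
  show "\<lfloor>(of_int q + 1) * phi\<rfloor> - \<lfloor>of_int q * phi\<rfloor> = 2" using f0 f1 by simp
  assume h: "\<lfloor>real (s+1) * phi\<rfloor> - q = 2"
  have e: "real (s+1) * phi = of_int q + r + phi" unfolding r_def by (simp add: algebra_simps)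
  have "2 - phi \<le> r"
  proof (rule ccontr)
    assume "\<not> 2 - phi \<le> r"
    then have "\<lfloor>real (s+1) * phi\<rfloor> = q + 1" unfolding e using r1 phi_bounds
      by (subst floor_eq_iff) simp
    with h show False by simp
  qed
  moreover have "r \<noteq> 2 - phi"
  proof
    assume "r = 2 - phi"
    then have "real (s+1) * phi = of_int (q + 2)" unfolding e by simp
    with phi_int[of "s+1" "q+2"] show False by simp
  qed
  ultimately have r2: "2 - phi < r" by simp
  have "(2 - phi) * (phi - 1) < w" unfolding w_def using r2 phi_bounds by (simp add: mult_strict_right_mono)
  moreover have "(2 - phi) * (phi - 1) = 2 * phi - 3" using phi_sq by (simp add: power2_eq_square algebra_simps)
  ultimately have w2: "2 * phi - 3 < w" by simp
  have f2: "\<lfloor>(of_int q + 2) * phi\<rfloor> = q + int s + 2"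
  proof -
    have "(of_int q + 2) * phi = of_int q + real s - w + 2 * phi" using id by (simp add: algebra_simps)
    then show ?thesis using w2 w1 phi_bounds by (subst floor_eq_iff) simp
  qed
  show "\<lfloor>(of_int q + 2) * phi\<rfloor> - \<lfloor>(of_int q + 1) * phi\<rfloor> = 1" using f1 f2 by simp
qed

lemma g_pos: assumes "s > 0" shows "g s \<ge> 1"
proof -
  have "real s \<ge> 1" using assms by simp
  then have "real s * phi \<ge> 1 * 1" using phi_bounds by (intro mult_mono) auto
  then show ?thesis unfolding g_def by (simp add: le_floor_iff)
qed

lemma cw_P: assumes "s > 0" shows "cw (nat (g s) - 1) = 0"
proof -
  have ge: "g s \<ge> 1" using g_pos[OF assms] .
  have a: "real (nat (g s) - 1 + 2) = of_int (g s) + 1" using ge by (simp add: of_nat_diff)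
  have b: "real (nat (g s) - 1 + 1) = of_int (g s)" using ge by (simp add: of_nat_diff)
  have c: "g (nat (g s) - 1 + 2) = \<lfloor>(of_int (g s) + 1) * phi\<rfloor>" by (simp only: g_def[of "nat (g s) - 1 + 2"] a)
  have d: "g (nat (g s) - 1 + 1) = \<lfloor>of_int (g s) * phi\<rfloor>" by (simp only: g_def[of "nat (g s) - 1 + 1"] b)
  show ?thesis using key_floor(1)[OF assms] unfolding cw_def c d by (simp add: g_def)
qed

lemma cw_P1: assumes "s > 0" "g (s+1) - g s = 2" shows "cw (nat (g s)) = 1"
proof -
  have ge: "g s \<ge> 1" using g_pos[OF assms(1)] .
  have a: "real (nat (g s) + 2) = of_int (g s) + 2" using ge by simp
  have b: "real (nat (g s) + 1) = of_int (g s) + 1" using ge by simp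
  have c: "g (nat (g s) + 2) = \<lfloor>(of_int (g s) + 2) * phi\<rfloor>" by (simp only: g_def[of "nat (g s) + 2"] a)
  have d: "g (nat (g s) + 1) = \<lfloor>(of_int (g s) + 1) * phi\<rfloor>" by (simp only: g_def[of "nat (g s) + 1"] b)
  have e: "\<lfloor>real (s+1) * phi\<rfloor> - \<lfloor>real s * phi\<rfloor> = 2" using assms(2) unfolding g_def .
  show ?thesis using key_floor(2)[OF assms(1) e] unfolding cw_def c d by (simp add: g_def)
qed

lemma sigma_append: "sigma (xs @ ys) = sigma xs @ sigma ys"
  unfolding sigma_def by simp

lemma sigma_W: "sigma (map cw [0..<L]) = map cw [0..<nat (g (L+1)) - 1]"
proof (induction L)
  case 0
  have "g 1 = 1" unfolding g_def using phi_bounds by (simp add: floor_eq_iff)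
  then show ?case by (simp add: sigma_def)
next
  case (Suc L)
  define p where "p = nat (g (L+1)) - 1"
  have ge: "g (L+1) \<ge> 1" using g_pos by simp
  have st: "g (L+2) - g (L+1) = 1 \<or> g (L+2) - g (L+1) = 2" using g_step[of "L+1"] by simp
  have cp: "cw p = 0" unfolding p_def using cw_P[of "L+1"] by simp
  have "sigma (map cw [0..<Suc L]) = map cw [0..<p] @ sigma_letter (cw L)"
    using Suc.IH unfolding p_def by (simp add: sigma_append) (simp add: sigma_def)
  also have "\<dots> = map cw [0..<nat (g (Suc L + 1)) - 1]"
  proof (cases "g (L+2) - g (L+1) = 2")
    case True
    then have cL: "cw L = 0" unfolding cw_def by simp
    have cp1: "cw (p+1) = 1" unfolding p_def using cw_P1[of "L+1"] True ge
      by (simp add: Suc_diff_le nat_le_iff)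
    have e: "nat (g (Suc L + 1)) - 1 = p + 2" unfolding p_def using True ge by simp
    show ?thesis unfolding e using cL cp cp1 by simp
  next
    case False
    then have d: "g (L+2) - g (L+1) = 1" using st by simp
    then have cL: "cw L = 1" unfolding cw_def by simp
    have e: "nat (g (Suc L + 1)) - 1 = p + 1" unfolding p_def using d ge by simp
    show ?thesis unfolding e using cL cp by simp
  qed
  finally show ?case .
qed

lemma prefix_W: "\<exists>L. L \<ge> k + 1 \<and> fib_prefix k = map cw [0..<L]"
proof (induction k)
  case 0
  have "g (Suc (Suc 0)) = 3" "g (Suc 0) = 1" unfolding g_def using phi_bounds by (simp_all add: floor_eq_iff)
  then have "cw 0 = 0" unfolding cw_def by simp
  then show ?case unfolding fib_prefix_def by (intro exI[of _ 1]) simp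
next
  case (Suc k)
  then obtain L where L: "L \<ge> k + 1" "fib_prefix k = map cw [0..<L]" by blast
  have "fib_prefix (Suc k) = sigma (fib_prefix k)" unfolding fib_prefix_def by simp
  also have "\<dots> = map cw [0..<nat (g (L+1)) - 1]" using L(2) sigma_W by simp
  finally have e: "fib_prefix (Suc k) = map cw [0..<nat (g (L+1)) - 1]" .
  have "real (L+1) * phi \<ge> real (L + 2)"
  proof -
    have "real (L+1) * (phi - 1) \<ge> 2 * (1/2)" using L(1) phi_bounds
      by (intro mult_mono) auto
    then show ?thesis by (simp add: algebra_simps)
  qed
  then have "g (L+1) \<ge> int (L + 2)" unfolding g_def by (simp add: le_floor_iff)
  then have "nat (g (L+1)) - 1 \<ge> Suc k + 1" using L(1) by linarith
  with e show ?case by blast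
qed

lemma fib_word_cw: "fib_word i = cw i"
proof -
  obtain L where L: "L \<ge> Suc i + 1" "fib_prefix (Suc i) = map cw [0..<L]" using prefix_W by blast
  then show ?thesis unfolding fib_word_def by simp
qed

lemma int_ivt:
  fixes J :: "int \<Rightarrow> int" and M K :: int
  assumes step: "\<And>a. J a < J (a+1) \<and> J (a+1) \<le> J a + M" and a0: "J a0 < K"
  shows "\<exists>a. K \<le> J a \<and> J a < K + M"
proof -
  have "\<forall>a. J a < K \<longrightarrow> nat (K - J a) \<le> N \<longrightarrow> (\<exists>a. K \<le> J a \<and> J a < K + M)" for N
  proof (induction N)
    case 0
    then show ?case by auto
  next
    case (Suc N)
    show ?case
    proof (intro allI impI)
      fix a assume h: "J a < K" "nat (K - J a) \<le> Suc N"
      show "\<exists>a. K \<le> J a \<and> J a < K + M"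
      proof (cases "K \<le> J (a+1)")
        case True
        then show ?thesis using step[of a] h by (intro exI[of _ "a+1"]) auto
      next
        case False
        have "J (a+1) < K" using False by simp
        moreover have "nat (K - J (a+1)) \<le> N" using h step[of a] by linarith
        ultimately show ?thesis using Suc.IH by blast
      qed
    qed
  qed
  then show ?thesis using a0 by blast
qed

lemma cover_core:
  fixes al be t :: real and P Q K :: int
  assumes be: "be > 0" and al: "al < 0" "- al < be" and P: "P \<ge> 1" and Q: "Q \<ge> 0"
  shows "\<exists>a b. K \<le> a*P + b*Q \<and> a*P + b*Q < K + P + Q \<and> t \<le> of_int a*al + of_int b*be \<and> of_int a*al + of_int b*be < t + be"
proof -
  define B where "B a = \<lceil>(t - of_int a * al) / be\<rceil>" for a :: int
  define J where "J a = a*P + B a * Q" for a :: int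
  have Bb: "t \<le> of_int a*al + of_int (B a)*be \<and> of_int a*al + of_int (B a)*be < t + be" for a
  proof -
    have c: "(t - of_int a * al) / be \<le> of_int (B a)" "of_int (B a) < (t - of_int a * al) / be + 1"
      unfolding B_def by linarith+
    from c(1) have "t - of_int a * al \<le> of_int (B a) * be" using be by (simp add: divide_le_eq)
    moreover from c(2) have "of_int (B a) * be < t - of_int a * al + be" using be
      by (simp add: less_divide_eq field_simps)
    ultimately show ?thesis by linarith
  qed
  have Bs: "B (a+1) = B a \<or> B (a+1) = B a + 1" for a
  proof -
    define x where "x = (t - of_int a * al) / be"
    define ga where "ga = - al / be"
    have g0: "0 < ga" "ga < 1" unfolding ga_def using be al by (simp_all add: divide_less_eq less_divide_eq)
    have "(t - of_int (a+1) * al) / be = x + ga" unfolding x_def ga_def using be by (simp add: field_simps)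
    then have e: "B (a+1) = \<lceil>x + ga\<rceil>" "B a = \<lceil>x\<rceil>" unfolding B_def x_def by simp_all
    have "\<lceil>x\<rceil> \<le> \<lceil>x + ga\<rceil>" using g0 by (intro ceiling_mono) simp
    moreover have "\<lceil>x + ga\<rceil> \<le> \<lceil>x\<rceil> + 1" using g0 le_of_int_ceiling[of x] by (simp add: ceiling_le_iff, linarith)
    ultimately show ?thesis unfolding e by linarith
  qed
  have Js: "J a < J (a+1) \<and> J (a+1) \<le> J a + (P + Q)" for a
    using Bs[of a] P Q unfolding J_def by (auto simp: algebra_simps)
  define a0 where "a0 = - (\<bar>K\<bar> + \<bar>B 0\<bar> * Q + 1)"
  have a0n: "a0 \<le> 0" proof -
    have "0 \<le> \<bar>B 0\<bar> * Q" using Q by simp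
    then show ?thesis unfolding a0_def by linarith
  qed
  have "B a0 \<le> B 0" unfolding B_def
  proof (intro ceiling_mono)
    have "of_int a0 * al \<ge> 0" using a0n al by (simp add: mult_nonpos_nonpos)
    then show "(t - of_int a0 * al) / be \<le> (t - of_int 0 * al) / be" using be by (simp add: divide_right_mono)
  qed
  then have "B a0 * Q \<le> B 0 * Q" using Q by (simp add: mult_right_mono)
  moreover have "a0 * P \<le> a0" using mult_left_mono_neg[OF P a0n] by simp
  moreover have "B 0 * Q \<le> \<bar>B 0\<bar> * Q" using Q by (simp add: mult_right_mono)
  ultimately have "J a0 < K" unfolding J_def a0_def by linarith
  from int_ivt[of J "P+Q", OF Js this] obtain a where "K \<le> J a" "J a < K + (P + Q)" by blast
  then show ?thesis using Bb[of a] unfolding J_def by (intro exI[of _ a] exI[of _ "B a"]) auto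
qed

definition e :: "nat \<Rightarrow> real" where "e k = real (fib k) * phi - real (fib (Suc k))"

lemma phi_pos: "phi > 0" using phi_bounds by simp

lemma e_rec: "e (Suc k) = - e k / phi"
proof -
  have pp: "phi * phi = phi + 1" using phi_sq by (simp add: power2_eq_square)
  have "e (Suc k) * phi = real (fib (Suc k)) * (phi * phi) - real (fib (Suc (Suc k))) * phi"
    by (simp add: e_def algebra_simps)
  also have "\<dots> = real (fib (Suc k)) * (phi + 1) - (real (fib (Suc k)) + real (fib k)) * phi"
    unfolding pp by simp
  also have "\<dots> = - e k" by (simp add: e_def algebra_simps)
  finally have "e (Suc k) * phi = - e k" .
  then show ?thesis using phi_pos by (simp add: field_simps)
qed

lemma e_abs: "\<bar>e k\<bar> = inverse (phi^k)"
proof (induction k)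
  case 0
  then show ?case unfolding e_def by simp
next
  case (Suc k)
  then show ?case using phi_pos by (simp add: e_rec abs_div field_simps)
qed

lemma e_nz: "e k \<noteq> 0" using e_abs[of k] phi_pos by auto

lemma fib_Suc_pos: "fib (Suc k) > 0"
proof (induction k rule: nat_less_induct)
  case (1 n)
  show ?case
  proof (cases n)
    case 0 then show ?thesis by simp
  next
    case (Suc m)
    then have "fib (Suc m) > 0" using 1 by simp
    then show ?thesis using Suc by simp
  qed
qed

lemma cover_ab:
  fixes k :: nat and t :: real
  shows "\<exists>a b :: int. 0 \<le> a * int (fib (Suc k)) + b * int (fib k)
     \<and> a * int (fib (Suc k)) + b * int (fib k) < int (fib (Suc k)) + int (fib k)
     \<and> t \<le> of_int a * e (Suc k) + of_int b * e k
     \<and> of_int a * e (Suc k) + of_int b * e k < t + \<bar>e k\<bar>"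
proof -
  have P: "int (fib (Suc k)) \<ge> 1" using fib_Suc_pos[of k] by linarith
  have Q: "int (fib k) \<ge> 0" by simp
  show ?thesis
  proof (cases "e k > 0")
    case True
    have al: "e (Suc k) < 0" "- e (Suc k) < e k" using True phi_bounds
      by (simp_all add: e_rec divide_less_eq)
    from cover_core[OF True al P Q, of 0 t] show ?thesis using True by auto
  next
    case False
    then have ek: "e k < 0" using e_nz[of k] by linarith
    have be: "- e k > 0" using ek by simp
    have al: "- e (Suc k) < 0" "- (- e (Suc k)) < - e k" using ek phi_bounds
      by (simp_all add: e_rec divide_less_eq less_divide_eq)
    from cover_core[OF be al P Q, of "1 - (int (fib (Suc k)) + int (fib k))" t]
    obtain a b where h: "1 - (int (fib (Suc k)) + int (fib k)) \<le> a * int (fib (Suc k)) + b * int (fib k)"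
      "a * int (fib (Suc k)) + b * int (fib k) < 1 - (int (fib (Suc k)) + int (fib k)) + int (fib (Suc k)) + int (fib k)"
      "t \<le> of_int a * - e (Suc k) + of_int b * - e k"
      "of_int a * - e (Suc k) + of_int b * - e k < t + - e k" by blast
    show ?thesis
      apply (rule exI[of _ "-a"], rule exI[of _ "-b"])
      using h ek by auto
  qed
qed

lemma cover:
  fixes k y :: nat and A :: real
  assumes A0: "0 \<le> A" and A1: "A + inverse (phi^k) \<le> 1"
  shows "\<exists>j < fib (Suc (Suc k)). A \<le> frac (real (y+j) * phi) \<and> frac (real (y+j) * phi) < A + inverse (phi^k)"
proof -
  define t where "t = A - frac (real y * phi)"
  obtain a b :: int where h: "0 \<le> a * int (fib (Suc k)) + b * int (fib k)"
     "a * int (fib (Suc k)) + b * int (fib k) < int (fib (Suc k)) + int (fib k)"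
     "t \<le> of_int a * e (Suc k) + of_int b * e k"
     "of_int a * e (Suc k) + of_int b * e k < t + \<bar>e k\<bar>" using cover_ab by blast
  define J where "J = a * int (fib (Suc k)) + b * int (fib k)"
  define w where "w = of_int a * e (Suc k) + of_int b * e k"
  define N where "N = a * int (fib (Suc (Suc k))) + b * int (fib (Suc k))"
  have Jw: "of_int J * phi = of_int N + w" unfolding J_def N_def w_def e_def by (simp add: algebra_simps)
  have fs: "fib (Suc (Suc k)) = fib (Suc k) + fib k" by simp
  have jlt: "nat J < fib (Suc (Suc k))" using h(1,2) unfolding J_def fs by linarith
  have rj: "real (nat J) = of_int J" using h(1) unfolding J_def by simp
  have x: "real (y + nat J) * phi = of_int (\<lfloor>real y * phi\<rfloor> + N) + (frac (real y * phi) + w)"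
    unfolding of_nat_add rj distrib_right Jw frac_def by simp
  have wr: "t \<le> w" "w < t + inverse (phi^k)" using h(3,4) unfolding w_def e_abs by auto
  have fr: "frac (real (y + nat J) * phi) = frac (real y * phi) + w"
    unfolding x frac_add_of_int_left using wr A0 A1 unfolding t_def by (subst frac_eq) linarith
  have "A \<le> frac (real (y + nat J) * phi) \<and> frac (real (y + nat J) * phi) < A + inverse (phi^k)"
    unfolding fr using wr unfolding t_def by linarith
  then show ?thesis using jlt by blast
qed

lemma D_eq: "cw i = cw i' \<Longrightarrow> g (i+2) - g (i+1) = g (i'+2) - g (i'+1)"
proof -
  assume h: "cw i = cw i'"
  have e1: "i+1+1 = i+2" "i'+1+1 = i'+2" by simp_all
  have a: "g (i+2) - g (i+1) = 1 \<or> g (i+2) - g (i+1) = 2" using g_step[of "i+1"] unfolding e1 .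
  have b: "g (i'+2) - g (i'+1) = 1 \<or> g (i'+2) - g (i'+1) = 2" using g_step[of "i'+1"] unfolding e1 .
  show ?thesis
  proof (cases "g (i+2) - g (i+1) = 2")
    case True
    then have "cw i = 0" unfolding cw_def by simp
    then have "cw i' = 0" using h by simp
    then have "g (i'+2) - g (i'+1) = 2" unfolding cw_def by (simp split: if_splits)
    then show ?thesis using True by simp
  next
    case False
    then have "cw i = 1" unfolding cw_def by simp
    then have "cw i' = 1" using h by simp
    then have "g (i'+2) - g (i'+1) \<noteq> 2" unfolding cw_def by (simp split: if_splits)
    then show ?thesis using False a b by linarith
  qed
qed

theorem proposition16:
  fixes n l :: nat
  assumes "n > 0" and "l > 0"
    and "phi powi (1 - int n) \<le>
           min (frac (2 * real l * real (fib n) * phi)) (1 - frac (2 * real l * real (fib n) * phi))"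
  shows "\<forall>x::nat. fib_factor x (x + 2 * fib n) \<noteq>
           fib_factor (x + 2 * l * fib n) (x + 2 * l * fib n + 2 * fib n)"
proof
  fix x :: nat
  obtain k where n: "n = Suc k" using assms(1) not0_implies_Suc by blast
  define d where "d = 2 * l * fib n"
  define m where "m = 2 * fib n"
  define th where "th = frac (real d * phi)"
  define Gk where "Gk = inverse (phi ^ k)"
  have thd: "frac (2 * real l * real (fib n) * phi) = th" unfolding th_def d_def by simp
  have pw: "phi powi (1 - int n) = Gk" unfolding Gk_def n by (simp add: power_int_minus)
  have hyp: "Gk \<le> th" "Gk \<le> 1 - th" using assms(3) unfolding thd pw by auto
  have th01: "0 \<le> th" "th < 1" unfolding th_def by (simp_all add: frac_lt_1)
  show "fib_factor x (x + 2 * fib n) \<noteq> fib_factor (x + 2 * l * fib n) (x + 2 * l * fib n + 2 * fib n)"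
  proof
    assume eq: "fib_factor x (x + 2 * fib n) = fib_factor (x + 2 * l * fib n) (x + 2 * l * fib n + 2 * fib n)"
    have cweq: "cw (x+j) = cw (x+d+j)" if "j < m" for j
    proof -
      have "fib_factor x (x + m) ! j = fib_factor (x + d) (x + d + m) ! j"
        using eq unfolding d_def m_def by simp
      then show ?thesis using that unfolding fib_factor_def by (simp add: fib_word_cw add.assoc)
    qed
    define ind where "ind t = (if frac (real (x+t) * phi) + th < 1 then 0 else 1::int)" for t
    have hform: "g (x+d+t) - g (x+t) = \<lfloor>real d * phi\<rfloor> + ind t" for t
    proof -
      have "real (x+d+t) * phi = real (x+t) * phi + real d * phi" by (simp add: algebra_simps)
      then have "g (x+d+t) = \<lfloor>real (x+t) * phi + real d * phi\<rfloor>" by (simp only: g_def)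
      also have "\<dots> = g (x+t) + \<lfloor>real d * phi\<rfloor> + ind t"
        unfolding floor_add g_def ind_def th_def by simp
      finally show ?thesis by simp
    qed
    have indstep: "ind (j+2) = ind (j+1)" if "j < m" for j
    proof -
      have "g (x+d+j+2) - g (x+d+j+1) = g (x+j+2) - g (x+j+1)"
        using D_eq[OF cweq[OF that]] by (simp add: add.assoc)
      then have "g (x+d+(j+2)) - g (x+(j+2)) = g (x+d+(j+1)) - g (x+(j+1))" by (simp add: add.assoc)
      then show ?thesis unfolding hform by simp
    qed
    have indc: "j \<le> m \<Longrightarrow> ind (1+j) = ind 1" for j
    proof (induction j)
      case 0 then show ?case by simp
    next
      case (Suc j)
      then have "ind (j+2) = ind (j+1)" using indstep by simp
      then show ?case using Suc by simp
    qed
    have fk: "fib (Suc (Suc k)) \<le> m" unfolding m_def n using fib_Suc_mono[of k] by simp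
    show False
    proof (cases "ind 1 = 1")
      case True
      have "0 + Gk \<le> 1" using hyp th01 by linarith
      from cover[of 0 k "x+1"] this[unfolded Gk_def] obtain j where j: "j < fib (Suc (Suc k))"
        "frac (real (x+1+j) * phi) < 0 + Gk" unfolding Gk_def by auto
      have "ind (1+j) = 0" unfolding ind_def using j(2) hyp by (simp add: add.assoc)
      moreover have "ind (1+j) = ind 1" using indc[of j] j(1) fk by linarith
      ultimately show False using True by simp
    next
      case False
      have a0: "0 \<le> 1 - th" "(1 - th) + Gk \<le> 1" using hyp th01 by linarith+
      from cover[of "1 - th" k "x+1"] a0[unfolded Gk_def] obtain j where j: "j < fib (Suc (Suc k))"
        "1 - th \<le> frac (real (x+1+j) * phi)" unfolding Gk_def by auto
      have "ind (1+j) = 1" unfolding ind_def using j(2) by (simp add: add.assoc)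
      moreover have "ind (1+j) = ind 1" using indc[of j] j(1) fk by linarith
      ultimately show False using False by simp
    qed
  qed
qed

end
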